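(* Let $\mathbf{\Phi}\in\mathbb{R}^{m\times n}$ be a measurement matrix and $c>1$. Then OMP$_{cK}$ perfectly recovers any $K$-sparse signal $\mathbf{x}\in\mathbb{R}^n$ from the measurements $\mathbf{y}=\mathbf{\Phi}\mathbf{x}$ (i.e. $\hat{\mathbf{x}}^{\lceil cK\rceil}=\mathbf{x}$) if $$c\;\ge\;-\frac{4(1+\delta)}{1-\delta}\,\log\!\left(\frac12-\sqrt{\frac{\delta}{2+2\delta}}\right),\qquad\text{where }\delta:=\delta_{\lfloor (c+1)K\rfloor},$$ and $\log$ is the natural logarithm.
   Context: Orthogonal matching pursuit (OMP): given $\mathbf{y}\in\mathbb{R}^m$ and $\mathbf{\Phi}\in\mathbb{R}^{m\times n}$ with columns $\phi_1,\dots,\phi_n$, set $T^0=\emptyset$, $\mathbf{r}^0=\mathbf{y}$, and for $k=1,2,\dots$: choose $t^k\in\arg\max_{i}|\langle \mathbf{r}^{k-1},\phi_i\rangle|$; set $T^k=T^{k-1}\cup\{t^k\}$; let $\hat{\mathbf{x}}^k=\arg\min_{\mathbf{u}:\,\mathrm{supp}(\mathbf{u})=T^k}\|\mathbf{y}-\mathbf{\Phi}\mathbf{u}\|_2$; set $\mathbf{r}^k=\mathbf{y}-\mathbf{\Phi}\hat{\mathbf{x}}^k$. OMP$_{cK}$ is OMP run for $\lceil cK\rceil$ iterations, outputting $\hat{\mathbf{x}}^{\lceil cK\rceil}$. A vector is $K$-sparse if it has at most $K$ nonzero entries. The restricted isometry constant $\delta_j$ of $\mathbf{\Phi}$ is the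 smallest $\delta\ge0$ such that $(1-\delta)\|\mathbf{v}\|_2^2\le\|\mathbf{\Phi}\mathbf{v}\|_2^2\le(1+\delta)\|\mathbf{v}\|_2^2$ for every $j$-sparse $\mathbf{v}\in\mathbb{R}^n$. *)

theory Defs
  imports "HOL-Analysis.Analysis"
begin

definition supp :: "real^'n \<Rightarrow> 'n set" where
  "supp v = {i. v $ i \<noteq> 0}"

definition sparse :: "nat \<Rightarrow> real^'n \<Rightarrow> bool" where
  "sparse K v \<longleftrightarrow> card (supp v) \<le> K"

definition ric :: "real^'n^'m \<Rightarrow> nat \<Rightarrow> real" where
  "ric Phi j = Inf {d. d \<ge> 0 \<and> (\<forall>v. sparse j v \<longrightarrow>
      (1 - d) * (norm v)^2 \<le> (norm (Phi *v v))^2 \<and>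
      (norm (Phi *v v))^2 \<le> (1 + d) * (norm v)^2)}"

definition ls_min :: "real^'n^'m \<Rightarrow> real^'m \<Rightarrow> 'n set \<Rightarrow> real^'n \<Rightarrow> bool" where
  "ls_min Phi y T u \<longleftrightarrow> supp u \<subseteq> T \<and>
     (\<forall>w. supp w \<subseteq> T \<longrightarrow> norm (y - Phi *v u) \<le> norm (y - Phi *v w))"

text \<open>(T, xh) is a possible execution of N iterations of OMP on (y, Phi):
  T k is the index set and xh k the estimate after iteration k (any tie-breaking
  in the arg max and any choice of least-squares minimiser is allowed).\<close>
definition omp_run :: "real^'n^'m \<Rightarrow> real^'m \<Rightarrow> nat \<Rightarrow> (nat \<Rightarrow> 'n set) \<Rightarrow> (nat \<Rightarrow> real^'n) \<Rightarrow> bool" where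
  "omp_run Phi y N T xh \<longleftrightarrow>
     T 0 = {} \<and> xh 0 = 0 \<and>
     (\<forall>k. 1 \<le> k \<and> k \<le> N \<longrightarrow>
        (\<exists>t. (\<forall>i. \<bar>(y - Phi *v xh (k - 1)) \<bullet> column i Phi\<bar>
                    \<le> \<bar>(y - Phi *v xh (k - 1)) \<bullet> column t Phi\<bar>)
             \<and> T k = insert t (T (k - 1)))
        \<and> ls_min Phi y (T k) (xh k))"

end

theory Submission
  imports Defs
begin


lemma norm_sq_sum: "(norm (v::real^'n))\<^sup>2 = (\<Sum>i\<in>UNIV. (v$i)\<^sup>2)"
proof -
  have "(norm v)\<^sup>2 = v \<bullet> v" by (rule power2_norm_eq_inner)
  also have "\<dots> = (\<Sum>i\<in>UNIV. (v$i)\<^sup>2)" unfolding inner_vec_def by (simp add: power2_eq_square)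
  finally show ?thesis .
qed

lemma norm_diff_scale_sq: "(norm (r - a *\<^sub>R z))\<^sup>2 = (norm r)\<^sup>2 - 2*a*(r \<bullet> z) + a\<^sup>2*(norm z)\<^sup>2"
  unfolding power2_norm_eq_inner
  by (simp add: inner_diff_left inner_diff_right inner_commute algebra_simps power2_eq_square)

lemma norm_diff_sq: "(norm (r - z))\<^sup>2 = (norm r)\<^sup>2 - 2*(r \<bullet> z) + (norm z)\<^sup>2"
  unfolding power2_norm_eq_inner
  by (simp add: inner_diff_left inner_diff_right inner_commute algebra_simps)

lemma sumsq_le_norm: "(\<Sum>i\<in>F. ((v::real^'n)$i)\<^sup>2) \<le> (norm v)\<^sup>2"
  unfolding norm_sq_sum by (rule sum_mono2) auto

lemma inner_mult_sum: "(r::real^'m) \<bullet> ((Phi::real^'n^'m) *v w) = (\<Sum>i\<in>UNIV. w$i * (r \<bullet> column i Phi))"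
  by (simp add: matrix_mult_sum inner_sum_right scalar_mult_eq_scaleR)

lemma ls_min_orth:
  assumes "ls_min Phi y T u" "i \<in> T"
  shows "(y - Phi *v u) \<bullet> column i Phi = 0"
proof -
  define r where "r = y - Phi *v u"
  define p where "p = r \<bullet> column i Phi"
  define n where "n = (norm (column i Phi))\<^sup>2"
  define a where "a = p / (n + 1)"
  have n0: "n \<ge> 0" unfolding n_def by simp
  have "supp (u + a *\<^sub>R axis i 1) \<subseteq> T" using assms unfolding ls_min_def supp_def axis_def by auto
  then have "norm r \<le> norm (y - Phi *v (u + a *\<^sub>R axis i 1))" using assms(1) unfolding ls_min_def r_def by blast
  also have "y - Phi *v (u + a *\<^sub>R axis i 1) = r - a *\<^sub>R column i Phi"
    by (simp add: r_def matrix_vector_right_distrib matrix_vector_mult_basis matrix_vector_mult_scaleR)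
  finally have "(norm r)\<^sup>2 \<le> (norm (r - a *\<^sub>R column i Phi))\<^sup>2" by simp
  also have "\<dots> = (norm r)\<^sup>2 - 2 * a * p + a\<^sup>2 * n"
    unfolding norm_diff_scale_sq p_def n_def ..
  finally have "0 \<le> a * (a * n - 2 * p)" by (simp add: algebra_simps power2_eq_square)
  hence "0 \<le> p * (p * n - 2 * p * (n+1)) / (n+1)^2" using n0 by (simp add: a_def field_simps power2_eq_square)
  hence "0 \<le> p * (p * n - 2 * p * (n+1))" using n0 by (simp add: divide_nonneg_pos zero_le_divide_iff)
  hence "p\<^sup>2 * (n + 2) \<le> 0" by (simp add: algebra_simps power2_eq_square)
  moreover have "0 \<le> p\<^sup>2 * (n + 2)" using n0 by simp
  ultimately have "p\<^sup>2 * (n + 2) = 0" by linarith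
  hence "p = 0" using n0 by simp
  thus ?thesis unfolding p_def r_def by simp
qed

lemma supp_diff: "supp (u - v) \<subseteq> supp u \<union> supp v" unfolding supp_def by auto
lemma supp_add: "supp (u + v) \<subseteq> supp u \<union> supp v" unfolding supp_def by auto
lemma supp_empty_iff: "supp v = {} \<longleftrightarrow> v = 0" unfolding supp_def by (auto simp: vec_eq_iff)
lemma supp_axis: "supp (axis t (1::real)) = {t}" unfolding supp_def axis_def by auto

lemma sum_supp: "(\<Sum>i\<in>UNIV. (w::real^'n)$i * f i) = (\<Sum>i\<in>supp w. w$i * f i)"
  by (rule sum.mono_neutral_right) (auto simp: supp_def)

locale omp_ctx =
  fixes Phi :: "real^'n^'m" and x :: "real^'n" and T :: "nat \<Rightarrow> 'n set" and xh :: "nat \<Rightarrow> real^'n"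
    and N :: nat and d :: real and ord :: nat
  assumes run: "omp_run Phi (Phi *v x) N T xh"
    and rip: "\<And>v. card (supp v) \<le> ord \<Longrightarrow>
        (1-d)*(norm v)\<^sup>2 \<le> (norm (Phi *v v))\<^sup>2 \<and> (norm (Phi *v v))\<^sup>2 \<le> (1+d)*(norm v)\<^sup>2"
    and d_lt: "d < 1" and d_ge: "0 \<le> d" and ord_pos: "1 \<le> ord"
begin

abbreviation "y \<equiv> Phi *v x"
definition "r j = y - Phi *v xh j"
definition "R j = (norm (r j))\<^sup>2"
definition "A = 1 - d"
definition "B = 1 + d"

lemma A_pos: "A > 0" using d_lt by (simp add: A_def)
lemma B_pos: "B > 0" using d_ge by (simp add: B_def)
lemma A_le_B: "A \<le> B" using d_ge by (simp add: A_def B_def)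

lemma T0: "T 0 = {}" and xh0: "xh 0 = 0" using run unfolding omp_run_def by auto

lemma step_facts: assumes "1 \<le> k" "k \<le> N"
  shows "\<exists>t. (\<forall>i. \<bar>r (k-1) \<bullet> column i Phi\<bar> \<le> \<bar>r (k-1) \<bullet> column t Phi\<bar>) \<and> T k = insert t (T (k - 1))"
    and "ls_min Phi y (T k) (xh k)"
  using run assms unfolding omp_run_def r_def by auto

lemma T_suc: assumes "Suc j \<le> N" shows "T j \<subseteq> T (Suc j)"
  using step_facts(1)[of "Suc j"] assms by auto

lemma T_mono: assumes "j \<le> j'" "j' \<le> N" shows "T j \<subseteq> T j'"
  using assms
proof (induction j' rule: dec_induct)
  case base then show ?case by simp
next
  case (step n) then show ?case using T_suc[of n] by auto
qed

lemma card_T: "j \<le> N \<Longrightarrow> card (T j) \<le> j"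
proof (induction j)
  case 0 then show ?case by (simp add: T0)
next
  case (Suc j)
  then obtain t where "T (Suc j) = insert t (T j)" using step_facts(1)[of "Suc j"] by auto
  then show ?case using Suc by (simp add: card_insert_if)
qed

lemma supp_xh: "j \<le> N \<Longrightarrow> supp (xh j) \<subseteq> T j"
  using step_facts(2)[of j] xh0 by (cases "j = 0") (auto simp: ls_min_def supp_def)

lemma orth: assumes "j \<le> N" "i \<in> T j" shows "r j \<bullet> column i Phi = 0"
  using assms ls_min_orth[OF step_facts(2)[of j]] T0 by (cases "j = 0") (auto simp: r_def)

lemma R_le: assumes "j \<le> N" "supp u \<subseteq> T j" shows "R j \<le> (norm (y - Phi *v u))\<^sup>2"
proof (cases "j = 0")
  case True
  then have "u = 0" using assms T0 supp_empty_iff by auto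
  then show ?thesis using True by (simp add: R_def r_def xh0)
next
  case False
  then have "norm (r j) \<le> norm (y - Phi *v u)" using step_facts(2)[of j] assms
    unfolding ls_min_def r_def by auto
  then show ?thesis unfolding R_def by (simp add: power_mono)
qed

lemma R_mono_suc: assumes "Suc j \<le> N" shows "R (Suc j) \<le> R j"
  using R_le[of "Suc j" "xh j"] supp_xh[of j] T_suc[of j] assms by (auto simp: R_def r_def)

lemma col_norm: "(norm (column t Phi))\<^sup>2 \<le> B"
proof -
  have "card (supp (axis t (1::real))) \<le> ord" using ord_pos by (simp add: supp_axis)
  from rip[OF this] show ?thesis by (simp add: matrix_vector_mult_basis B_def)
qed

lemma step_bound:
  fixes P :: nat
  assumes j: "Suc j \<le> N" and su: "supp u \<subseteq> T j \<union> L" and cL: "card (T j \<union> L) \<le> ord"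
    and cP: "card L \<le> P" and P1: "1 \<le> P"
  shows "R (Suc j) - (norm (y - Phi *v u))\<^sup>2
      \<le> (1 - A/(B*P)) * (R j - (norm (y - Phi *v u))\<^sup>2)"
proof -
  define E where "E = (norm (y - Phi *v u))\<^sup>2"
  obtain t where tmax: "\<forall>i. \<bar>r j \<bullet> column i Phi\<bar> \<le> \<bar>r j \<bullet> column t Phi\<bar>"
    and Tt: "T (Suc j) = insert t (T j)" using step_facts(1)[of "Suc j"] j by auto
  define p where "p = r j \<bullet> column t Phi"
  define M where "M = \<bar>p\<bar>"
  define w where "w = u - xh j"
  have jN: "j \<le> N" using j by simp
  have suppw: "supp w \<subseteq> T j \<union> L" using supp_diff[of u "xh j"] supp_xh[OF jN] su unfolding w_def by auto
  have cardw: "card (supp w) \<le> ord" using card_mono[OF _ suppw] cL by (meson finite le_trans)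
  have Ew: "y - Phi *v u = r j - Phi *v w"
    by (simp add: r_def w_def matrix_vector_mult_diff_distrib)
  define F where "F = L - T j"
  have cF: "card F \<le> P" using cP card_mono[of L F] unfolding F_def by auto
  have Z: "w $ i * (r j \<bullet> column i Phi) = 0" if "i \<notin> F" for i
  proof (cases "i \<in> T j")
    case True then show ?thesis using orth[OF jN] by simp
  next
    case False
    then have "i \<notin> supp w" using that suppw unfolding F_def by auto
    then show ?thesis unfolding supp_def by simp
  qed
  have G: "r j \<bullet> (Phi *v w) = (\<Sum>i\<in>F. w$i * (r j \<bullet> column i Phi))"
    unfolding inner_mult_sum by (rule sum.mono_neutral_right) (auto simp: Z)
  have G2: "r j \<bullet> (Phi *v w) \<le> (\<Sum>i\<in>F. M * \<bar>w$i\<bar>)"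
    unfolding G
  proof (rule sum_mono)
    fix i assume "i \<in> F"
    have "w$i * (r j \<bullet> column i Phi) \<le> \<bar>w$i\<bar> * \<bar>r j \<bullet> column i Phi\<bar>"
      by (metis abs_ge_self abs_mult)
    also have "\<dots> \<le> \<bar>w$i\<bar> * M" using tmax unfolding M_def p_def by (simp add: mult_left_mono)
    finally show "w$i * (r j \<bullet> column i Phi) \<le> M * \<bar>w$i\<bar>" by (simp add: mult.commute)
  qed
  have per: "2*(M*\<bar>w$i\<bar>) - A*(w$i)\<^sup>2 \<le> M\<^sup>2/A" for i
  proof -
    have "0 \<le> (M - A*\<bar>w$i\<bar>)\<^sup>2" by simp
    hence "A*(2*(M*\<bar>w$i\<bar>) - A*(w$i)\<^sup>2) \<le> M\<^sup>2"
      by (simp add: power2_eq_square algebra_simps)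
    thus ?thesis using A_pos by (simp add: field_simps mult.commute)
  qed
  have sq: "(\<Sum>i\<in>F. (w$i)\<^sup>2) \<le> (norm w)\<^sup>2" by (rule sumsq_le_norm)
  have Eexp: "E = R j - 2*(r j \<bullet> (Phi *v w)) + (norm (Phi *v w))\<^sup>2"
    unfolding E_def Ew norm_diff_sq R_def ..
  have lowPw: "A*(norm w)\<^sup>2 \<le> (norm (Phi *v w))\<^sup>2" using rip[OF cardw] by (simp add: A_def)
  have "R j - E \<le> 2*(\<Sum>i\<in>F. M * \<bar>w$i\<bar>) - A*(\<Sum>i\<in>F. (w$i)\<^sup>2)"
  proof -
    have "A * (\<Sum>i\<in>F. (w$i)\<^sup>2) \<le> A * (norm w)\<^sup>2" using sq A_pos by (simp add: mult_left_mono)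
    thus ?thesis using Eexp G2 lowPw by linarith
  qed
  also have "\<dots> = (\<Sum>i\<in>F. 2*(M*\<bar>w$i\<bar>) - A*(w$i)\<^sup>2)"
    by (simp add: sum_subtractf sum_distrib_left)
  also have "\<dots> \<le> (\<Sum>i\<in>F. M\<^sup>2/A)" by (rule sum_mono) (rule per)
  also have "\<dots> = card F * (M\<^sup>2/A)" by simp
  also have "\<dots> \<le> P * (M\<^sup>2/A)" using cF A_pos by (intro mult_right_mono) auto
  finally have low: "A * (R j - E) / P \<le> M\<^sup>2" using A_pos P1
    by (simp add: field_simps mult.commute)
  define a where "a = p / B"
  define v where "v = xh j + a *\<^sub>R axis t 1"
  have "supp v \<subseteq> T (Suc j)" using supp_add[of "xh j" "a *\<^sub>R axis t 1"] supp_xh[OF jN] Tt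
    unfolding v_def supp_def axis_def by auto
  hence "R (Suc j) \<le> (norm (y - Phi *v v))\<^sup>2" using R_le j by auto
  also have "y - Phi *v v = r j - a *\<^sub>R column t Phi"
    by (simp add: v_def r_def matrix_vector_right_distrib matrix_vector_mult_basis matrix_vector_mult_scaleR)
  also have "(norm (r j - a *\<^sub>R column t Phi))\<^sup>2 = R j - 2*a*p + a\<^sup>2 * (norm (column t Phi))\<^sup>2"
    unfolding norm_diff_scale_sq R_def p_def ..
  also have "\<dots> \<le> R j - 2*a*p + a\<^sup>2 * B" using col_norm by (simp add: mult_left_mono)
  also have "\<dots> = R j - M\<^sup>2 / B" using B_pos by (simp add: a_def M_def field_simps power2_eq_square)
  finally have "R (Suc j) \<le> R j - M\<^sup>2 / B" .
  moreover have "A * (R j - E) / P / B \<le> M\<^sup>2 / B" using divide_right_mono[OF low, of B] B_pos by simp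
  ultimately have "R (Suc j) \<le> R j - A * (R j - E) / P / B" by linarith
  thus ?thesis unfolding E_def[symmetric] using B_pos P1 by (simp add: field_simps)
qed

lemma factor_range: fixes P :: nat assumes "1 \<le> P" shows "0 \<le> 1 - A/(B*P)" "1 - A/(B*P) \<le> 1"
proof -
  have P1: "(1::real) \<le> real P" using assms by simp
  have "B * 1 \<le> B * real P" using B_pos P1 by (intro mult_left_mono) auto
  hence "A \<le> B * real P" using A_le_B by simp
  moreover have "0 < B * real P" using B_pos P1 by simp
  ultimately have "A/(B*P) \<le> 1" by (simp add: divide_le_eq)
  thus "0 \<le> 1 - A/(B*P)" by simp
  show "1 - A/(B*P) \<le> 1" using A_pos B_pos assms by simp
qed

lemma phase:
  fixes P :: nat
  assumes jm: "j0 + m \<le> N" and su: "supp u \<subseteq> T j0 \<union> L"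
    and cL: "\<And>j. j0 \<le> j \<Longrightarrow> j < j0 + m \<Longrightarrow> card (T j \<union> L) \<le> ord"
    and cP: "card L \<le> P" and P1: "1 \<le> P"
  shows "R (j0 + m) - (norm (y - Phi *v u))\<^sup>2
      \<le> (1 - A/(B*P))^m * (R j0 - (norm (y - Phi *v u))\<^sup>2)"
  using jm cL
proof (induction m)
  case 0 then show ?case by simp
next
  case (Suc m)
  have IH: "R (j0 + m) - (norm (y - Phi *v u))\<^sup>2 \<le> (1 - A/(B*P))^m * (R j0 - (norm (y - Phi *v u))\<^sup>2)"
    using Suc by auto
  have su': "supp u \<subseteq> T (j0+m) \<union> L" using su T_mono[of j0 "j0+m"] Suc.prems by auto
  have "R (Suc (j0 + m)) - (norm (y - Phi *v u))\<^sup>2 \<le> (1 - A/(B*P)) * (R (j0+m) - (norm (y - Phi *v u))\<^sup>2)"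
    using step_bound[OF _ su' _ cP P1] Suc.prems by auto
  also have "\<dots> \<le> (1 - A/(B*P)) * ((1 - A/(B*P))^m * (R j0 - (norm (y - Phi *v u))\<^sup>2))"
    using IH factor_range[OF P1] by (simp add: mult_left_mono)
  finally show ?case by simp
qed

end

definition sq :: "real^'n \<Rightarrow> 'n set \<Rightarrow> real" where "sq v F = (\<Sum>i\<in>F. (v$i)\<^sup>2)"
definition tau :: "real^'n \<Rightarrow> 'n set \<Rightarrow> nat \<Rightarrow> real" where
  "tau v G P = Min (sq v ` {U. U \<subseteq> G \<and> card U = card G - P})"
definition restr :: "'n set \<Rightarrow> real^'n \<Rightarrow> real^'n" where
  "restr V v = (\<chi> i. if i \<in> V then v$i else 0)"

lemma sq_nonneg: "0 \<le> sq v F" unfolding sq_def by (simp add: sum_nonneg)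
lemma sq_mono: "U \<subseteq> V \<Longrightarrow> sq v U \<le> sq v V" unfolding sq_def by (rule sum_mono2) auto
lemma supp_restr: "supp (restr V v) \<subseteq> V \<inter> supp v" unfolding supp_def restr_def by auto
lemma norm_restr: "(norm (restr V v))\<^sup>2 = sq v V"
proof -
  have "(norm (restr V v))\<^sup>2 = (\<Sum>i\<in>UNIV. (if i \<in> V then (v$i)\<^sup>2 else 0))"
    unfolding norm_sq_sum restr_def by (rule sum.cong) auto
  also have "\<dots> = sq v V" unfolding sq_def by (simp add: sum.If_cases)
  finally show ?thesis .
qed

lemma tau_set_ne: "{U. U \<subseteq> G \<and> card U = card G - P} \<noteq> {}"
proof -
  obtain U where "U \<subseteq> G" "card U = card G - P"
    using obtain_subset_with_card_n[of "card G - P" G] by auto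
  thus ?thesis by blast
qed

lemma tau_fin: "finite (sq v ` {U. U \<subseteq> (G::'n::finite set) \<and> card U = card G - P})" by (rule finite_imageI[OF finite])

lemma tau_ex: "\<exists>L\<subseteq>(G::'n::finite set). card L \<le> P \<and> sq v (G - L) = tau v G P"
proof -
  have "tau v G P \<in> sq v ` {U. U \<subseteq> G \<and> card U = card G - P}"
    unfolding tau_def using tau_set_ne by (intro Min_in[OF tau_fin]) auto
  then obtain U where U: "U \<subseteq> G" "card U = card G - P" "sq v U = tau v G P" by auto
  have "card (G - U) = card G - card U" using U by (simp add: card_Diff_subset finite_subset)
  hence "card (G - U) \<le> P" using U by simp
  moreover have "G - (G - U) = U" using U by auto
  ultimately show ?thesis using U by (intro exI[of _ "G - U"]) auto
qed

lemma tau_le: assumes "U \<subseteq> (G::'n::finite set)" "card G - P \<le> card U" shows "tau v G P \<le> sq v U"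
proof -
  obtain U' where U': "U' \<subseteq> U" "card U' = card G - P"
    using obtain_subset_with_card_n[OF assms(2)] by auto
  have "tau v G P \<le> sq v U'" unfolding tau_def using U' assms by (intro Min_le[OF tau_fin]) auto
  also have "\<dots> \<le> sq v U" using U' sq_mono by auto
  finally show ?thesis .
qed

lemma tau_nonneg: "0 \<le> tau v (G::'n::finite set) P"
proof -
  obtain L where "sq v (G - L) = tau v G P" using tau_ex[of G P v] by blast
  thus ?thesis using sq_nonneg[of v "G - L"] by simp
qed

lemma tau0: "tau v (G::'n::finite set) 0 = sq v G"
proof -
  have eq: "\<And>U. U \<subseteq> G \<Longrightarrow> card U = card G \<Longrightarrow> U = G" by (metis card_subset_eq finite)
  have "{U. U \<subseteq> G \<and> card U = card G - 0} = {G}" using eq by auto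
  thus ?thesis unfolding tau_def by simp
qed

lemma tau_big: "card (G::'n::finite set) \<le> P \<Longrightarrow> tau v G P = 0"
proof -
  assume "card G \<le> P"
  hence "{U. U \<subseteq> G \<and> card U = card G - P} = {{}}" by auto
  thus ?thesis unfolding tau_def by (simp add: sq_def)
qed

locale omp_main = omp_ctx +
  fixes K :: nat and Nf :: nat
  assumes sx: "card (supp x) \<le> K" and NfN: "Nf \<le> N" and NfK: "Nf + K \<le> ord"
begin

definition "Gam j = supp x - T j"

lemma LB: assumes "j \<le> Nf" shows "A * sq x (Gam j) \<le> R j"
proof -
  define z where "z = x - xh j"
  have jN: "j \<le> N" using assms NfN by simp
  have sz: "supp z \<subseteq> supp x \<union> T j" using supp_diff[of x "xh j"] supp_xh[OF jN] unfolding z_def by auto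
  have c1: "card (supp z) \<le> card (supp x \<union> T j)" using sz by (simp add: card_mono)
  have c2: "card (supp x \<union> T j) \<le> card (supp x) + card (T j)" by (rule card_Un_le)
  have c3: "card (T j) \<le> j" using card_T[OF jN] .
  have cz: "card (supp z) \<le> ord" using c1 c2 c3 sx assms NfK by linarith
  have h1: "A * (norm z)\<^sup>2 \<le> (norm (Phi *v z))\<^sup>2" using conjunct1[OF rip[OF cz]] unfolding A_def .
  have pz: "Phi *v z = r j" by (simp add: z_def r_def matrix_vector_mult_diff_distrib)
  have eqs: "sq x (Gam j) = (\<Sum>i\<in>Gam j. (z$i)\<^sup>2)" unfolding sq_def
  proof (rule sum.cong)
    fix i assume "i \<in> Gam j"
    hence "i \<notin> supp (xh j)" using supp_xh[OF jN] unfolding Gam_def by blast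
    hence "xh j $ i = 0" unfolding supp_def by blast
    thus "(x$i)\<^sup>2 = (z$i)\<^sup>2" unfolding z_def by simp
  qed (rule refl)
  have h2: "sq x (Gam j) \<le> (norm z)\<^sup>2" unfolding eqs by (rule sumsq_le_norm)
  have "A * sq x (Gam j) \<le> A * (norm z)\<^sup>2" using h2 A_pos by (simp add: mult_left_mono)
  thus ?thesis using h1 unfolding R_def pz by linarith
qed

lemma phi_restr: assumes "V \<subseteq> supp x" shows "(norm (Phi *v restr V x))\<^sup>2 \<le> B * sq x V"
proof -
  have "card (supp (restr V x)) \<le> card (supp x)" using supp_restr[of V x] by (simp add: card_mono)
  hence "card (supp (restr V x)) \<le> ord" using sx NfK by simp
  from rip[OF this] show ?thesis by (simp add: norm_restr B_def)
qed

lemma UB: assumes "j \<le> N" shows "R j \<le> B * sq x (Gam j)"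
proof -
  define u where "u = restr (T j) x"
  have "supp u \<subseteq> T j" using supp_restr unfolding u_def by blast
  hence h: "R j \<le> (norm (y - Phi *v u))\<^sup>2" using R_le assms by blast
  have "x - u = restr (Gam j) x"
    by (simp add: u_def Gam_def restr_def supp_def vec_eq_iff)
  hence "y - Phi *v u = Phi *v restr (Gam j) x"
    by (simp add: matrix_vector_mult_diff_distrib[symmetric])
  with h have "R j \<le> (norm (Phi *v restr (Gam j) x))\<^sup>2" by simp
  also have "(norm (Phi *v restr (Gam j) x))\<^sup>2 \<le> B * sq x (Gam j)"
    by (rule phi_restr) (auto simp: Gam_def)
  finally show ?thesis .
qed

lemma phase_tau:
  fixes P :: nat
  assumes ka: "k \<le> a" and am: "a + m \<le> Nf" and P1: "1 \<le> P"
  shows "R (a+m) \<le> (1 - (1 - A/(B*P))^m) * (B * tau x (Gam k) P) + (1 - A/(B*P))^m * R a"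
proof -
  define f where "f = (1 - A/(B*P))^m"
  obtain L where L: "L \<subseteq> Gam k" "card L \<le> P" "sq x (Gam k - L) = tau x (Gam k) P"
    using tau_ex[of "Gam k" P x] by blast
  define u where "u = x - restr (Gam k - L) x"
  have kN: "k \<le> N" "a \<le> N" "a + m \<le> N" using ka am NfN by auto
  have su: "supp u \<subseteq> T a \<union> L"
  proof
    fix i assume i: "i \<in> supp u"
    hence "x$i \<noteq> 0" "i \<notin> Gam k - L" unfolding u_def supp_def restr_def by (auto split: if_splits)
    hence "i \<in> T k \<or> i \<in> L" unfolding Gam_def supp_def by auto
    thus "i \<in> T a \<union> L" using T_mono[OF ka kN(2)] by auto
  qed
  have cL: "card (T j \<union> L) \<le> ord" if "a \<le> j" "j < a + m" for j
  proof -
    have "card (T j \<union> L) \<le> card (T j) + card L" by (rule card_Un_le)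
    moreover have "card (T j) \<le> j" using card_T that kN by simp
    moreover have "card L \<le> card (supp x)" using L(1) unfolding Gam_def by (intro card_mono) auto
    ultimately show ?thesis using sx that am NfK by linarith
  qed
  have ph: "R (a + m) - (norm (y - Phi *v u))\<^sup>2 \<le> f * (R a - (norm (y - Phi *v u))\<^sup>2)"
    unfolding f_def by (rule phase[OF kN(3) su cL L(2) P1])
  have "y - Phi *v u = Phi *v restr (Gam k - L) x"
    by (simp add: u_def matrix_vector_mult_diff_distrib)
  hence E: "(norm (y - Phi *v u))\<^sup>2 \<le> B * tau x (Gam k) P"
    using phi_restr[of "Gam k - L"] L(3) unfolding Gam_def by auto
  have f01: "0 \<le> f" "f \<le> 1" using factor_range[OF P1] unfolding f_def
    by (auto intro: power_le_one)
  have "R (a+m) \<le> (1 - f) * (norm (y - Phi *v u))\<^sup>2 + f * R a" using ph by (simp add: algebra_simps)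
  also have "\<dots> \<le> (1 - f) * (B * tau x (Gam k) P) + f * R a"
    using E f01 by (simp add: mult_left_mono)
  finally show ?thesis unfolding f_def .
qed

end

lemma alg1:
  fixes e g a b :: real
  assumes "0 < e" "e \<le> 1/2" "0 \<le> g" "g \<le> e" "0 \<le> a" "2*e*a \<le> b"
  shows "(1-g)*b + g*(2*(1-e)*a) \<le> 2*(1-e)*b"
proof -
  have b0: "0 \<le> b" using assms by (smt (verit) mult_nonneg_nonneg)
  have h1: "g*(1-e)*(2*e*a) \<le> g*(1-e)*b" using assms by (intro mult_left_mono) auto
  have h2: "g*(1-2*e)*b \<le> e*(1-2*e)*b" using assms b0 by (intro mult_right_mono) auto
  have "e*((1-g)*b + g*(2*(1-e)*a)) = e*(1-g)*b + g*(1-e)*(2*e*a)" by (simp add: algebra_simps)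
  also have "\<dots> \<le> e*(1-g)*b + g*(1-e)*b" using h1 by simp
  also have "\<dots> = e*b + g*(1-2*e)*b" by (simp add: algebra_simps)
  also have "\<dots> \<le> e*b + e*(1-2*e)*b" using h2 by simp
  also have "\<dots> = e*(2*(1-e)*b)" by (simp add: algebra_simps)
  finally show ?thesis using assms(1) by (simp add: mult_le_cancel_left_pos)
qed

lemma alg2:
  fixes e g a b :: real
  assumes "0 < e" "e \<le> 1/2" "0 \<le> g" "g \<le> e" "g < 1" "0 \<le> b" "b < 2*e*a"
  shows "(1-g)*b + g*(2*(1-e)*a) < 4*e*(1-e)*a"
proof -
  have a0: "0 \<le> a" using assms by (smt (verit) mult_pos_pos zero_less_mult_iff)
  have h1: "(1-g)*b < (1-g)*(2*e*a)" using assms by (intro mult_strict_left_mono) auto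
  have h2: "g*(1-2*e)*a \<le> e*(1-2*e)*a" using assms a0 by (intro mult_right_mono) auto
  have "(1-g)*b + g*(2*(1-e)*a) < (1-g)*(2*e*a) + g*(2*(1-e)*a)" using h1 by simp
  also have "\<dots> = 2*e*a + 2*(g*(1-2*e)*a)" by (simp add: algebra_simps)
  also have "\<dots> \<le> 2*e*a + 2*(e*(1-2*e)*a)" using h2 by simp
  also have "\<dots> = 4*e*(1-e)*a" by (simp add: algebra_simps)
  finally show ?thesis .
qed

lemma sum_pow2: "(\<Sum>l\<in>{1..i}. (2::real)^l) = 2^(i+1) - 2"
  by (induction i) (auto simp: sum.atLeast1_atMost_eq)

locale omp_phase = omp_main +
  fixes c kap e :: real
  assumes c_def: "c = 4 * kap" and kap_pos: "0 < kap"
    and e_pos: "0 < e" and e_half: "e \<le> 1/2" and e_rho0: "4*e*(1-e) \<le> (1-d)/(1+d)"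
    and m_ok0: "\<And>i. 1 \<le> i \<Longrightarrow> 1 \<le> nat \<lfloor>kap * 2^i\<rfloor> \<and>
                  (1 - (1-d)/((1+d)*real (2^i - 1 :: nat)))^(nat \<lfloor>kap * 2^i\<rfloor>) \<le> e"
    and Nf_def: "Nf = nat \<lfloor>c * K\<rfloor>"
begin

lemma e_rho: "4*e*(1-e) \<le> A/B" using e_rho0 by (simp add: A_def B_def)
lemma m_ok: "\<And>i. 1 \<le> i \<Longrightarrow> 1 \<le> nat \<lfloor>kap * 2^i\<rfloor> \<and>
                  (1 - A/(B*real (2^i - 1 :: nat)))^(nat \<lfloor>kap * 2^i\<rfloor>) \<le> e"
  using m_ok0 by (simp add: A_def B_def)

lemma le_Nf: "real j \<le> c * K \<Longrightarrow> j \<le> Nf"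
  unfolding Nf_def by (metis le_nat_floor of_nat_floor floor_of_nat le_floor_iff nat_int of_int_of_nat_eq le_nat_iff)


lemma main_claim: "card (Gam k) = s \<Longrightarrow> real k + c * real s \<le> c * real K \<Longrightarrow> Gam Nf = {}"
proof (induction s arbitrary: k rule: less_induct)
  case (less s)
  have cpos: "0 < c" using c_def kap_pos by simp
  have kNf: "k \<le> Nf" using less.prems(2) cpos by (intro le_Nf) (smt (verit) mult_nonneg_nonneg of_nat_0_le_iff)
  have kN: "k \<le> N" using kNf NfN by simp
  show ?case
  proof (cases "s = 0")
    case True
    then have "Gam k = {}" using less.prems(1) by simp
    moreover have "Gam Nf \<subseteq> Gam k" using T_mono[OF kNf NfN] unfolding Gam_def by auto
    ultimately show ?thesis by auto
  next
    case False
    define G where "G = Gam k"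
    define t where "t i = tau x G (2^i - 1)" for i :: nat
    define m where "m i = nat \<lfloor>kap * 2^i\<rfloor>" for i :: nat
    define f where "f i = (1 - A/(B*real (2^i - 1 :: nat)))^(m i)" for i :: nat
    define kk where "kk i = k + (\<Sum>l\<in>{1..i}. m l)" for i :: nat
    define mu where "mu = 2*e"
    define be where "be = 2*(1-e)"
    have cardG: "card G = s" using less.prems(1) G_def by simp
    have t0: "t 0 = sq x G" unfolding t_def by (simp add: tau0)
    have t0pos: "0 < t 0"
    proof -
      obtain i where i: "i \<in> G" using False cardG by fastforce
      hence "x$i \<noteq> 0" unfolding G_def Gam_def supp_def by auto
      hence "0 < (x$i)\<^sup>2" by simp
      also have "(x$i)\<^sup>2 \<le> sq x G" unfolding sq_def using i by (intro member_le_sum) auto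
      finally show ?thesis using t0 by simp
    qed
    have tnn: "0 \<le> t i" for i unfolding t_def by (rule tau_nonneg)
    have mu_pos: "0 < mu" using e_pos mu_def by simp
    have exL: "\<exists>i. 1 \<le> i \<and> t i < mu * t (i - 1)"
    proof (rule ccontr)
      assume "\<not> ?thesis"
      hence H: "\<And>i. 1 \<le> i \<Longrightarrow> mu * t (i - 1) \<le> t i" by (meson not_le)
      have "0 < t i" for i
      proof (induction i)
        case 0 then show ?case using t0pos by simp
      next
        case (Suc i) then show ?case using H[of "Suc i"] mu_pos
          by (smt (verit) diff_Suc_1 le_add1 mult_pos_pos plus_1_eq_Suc)
      qed
      moreover have "t s = 0" unfolding t_def
      proof (rule tau_big)
        have "s < 2^s" by (rule less_exp)
        thus "card G \<le> 2^s - 1" using cardG by linarith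
      qed
      ultimately show False by (metis less_irrefl)
    qed
    define L where "L = (LEAST i. 1 \<le> i \<and> t i < mu * t (i - 1))"
    have L1: "1 \<le> L" and tL: "t L < mu * t (L - 1)"
      using LeastI_ex[OF exL] unfolding L_def by auto
    have Lmin: "mu * t (i - 1) \<le> t i" if "1 \<le> i" "i < L" for i
      using not_less_Least[of i "\<lambda>i. 1 \<le> i \<and> t i < mu * t (i - 1)"] that unfolding L_def[symmetric]
      by auto
    obtain L' where L': "L = Suc L'" using L1 by (cases L) auto
    have tpos: "0 < t i" if "i < L" for i
      using that
    proof (induction i)
      case 0 then show ?case using t0pos by simp
    next
      case (Suc i)
      have "mu * t i \<le> t (Suc i)" using Lmin[of "Suc i"] Suc.prems by simp
      moreover have "0 < mu * t i" using Suc mu_pos by simp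
      ultimately show ?case by simp
    qed
    have sL: "2^L' \<le> s"
    proof (rule ccontr)
      assume "\<not> 2^L' \<le> s"
      hence "card G \<le> 2^L' - 1" using cardG by simp
      hence "t L' = 0" unfolding t_def by (rule tau_big)
      thus False using tpos[of L'] L' by simp
    qed
    have mle: "real (m l) \<le> kap * 2^l" for l
      unfolding m_def using kap_pos by (simp add: of_nat_floor)
    have budget: "real (\<Sum>l\<in>{1..i}. m l) \<le> kap * (2^(i+1) - 2)" for i
    proof -
      have "real (\<Sum>l\<in>{1..i}. m l) = (\<Sum>l\<in>{1..i}. real (m l))" by simp
      also have "\<dots> \<le> (\<Sum>l\<in>{1..i}. kap * 2^l)" by (rule sum_mono) (rule mle)
      also have "\<dots> = kap * (2^(i+1) - 2)" unfolding sum_distrib_left[symmetric] sum_pow2 ..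
      finally show ?thesis .
    qed
    have kkL: "real (kk L) \<le> real k + c * 2^L'"
    proof -
      have "real (kk L) \<le> real k + kap * (2^(L+1) - 2)" unfolding kk_def using budget[of L] by simp
      also have "\<dots> \<le> real k + c * 2^L'" using kap_pos unfolding c_def L' by simp
      finally show ?thesis .
    qed
    have kkL_Nf: "kk L \<le> Nf"
    proof (rule le_Nf)
      have "c * 2^L' \<le> c * s" using sL cpos by (simp add: mult_left_mono)
      hence "real (kk L) \<le> real k + c * s" using kkL by (smt (verit) of_nat_le_iff)
      thus "real (kk L) \<le> c * real K" using less.prems(2) by simp
    qed
    have kk_mono: "kk i \<le> kk L" if "i \<le> L" for i
      unfolding kk_def using that by (intro add_left_mono sum_mono2) auto
    have kk_suc: "kk (Suc i) = kk i + m (Suc i)" for i unfolding kk_def by simp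
    have kk_ge: "k \<le> kk i" for i unfolding kk_def by simp
    have P1i: "1 \<le> (2^i - 1 :: nat)" if "1 \<le> i" for i
    proof -
      have "2^1 \<le> (2::nat)^i" by (rule power_increasing[OF that]) simp
      thus ?thesis by simp
    qed
    have fe: "0 \<le> f i \<and> f i \<le> e" if "1 \<le> i" for i
    proof
      show "0 \<le> f i" unfolding f_def using factor_range(1)[OF P1i[OF that]] by simp
      show "f i \<le> e" unfolding f_def m_def using m_ok[OF that] by simp
    qed
    have f_lt1: "f i < 1" if "1 \<le> i" for i
    proof -
      have P1: "(1::real) \<le> real (2^i - 1 :: nat)" using P1i[OF that] by linarith
      have "0 < A/(B*real (2^i - 1 :: nat))" using A_pos B_pos P1 by simp
      hence b1: "1 - A/(B*real (2^i - 1 :: nat)) < 1" by simp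
      have b0: "0 \<le> 1 - A/(B*real (2^i - 1 :: nat))" using factor_range(1)[OF P1i[OF that]] .
      have m1: "1 \<le> m i" using m_ok[OF that] m_def by simp
      have "f i \<le> (1 - A/(B*real (2^i - 1 :: nat)))^1"
        unfolding f_def by (rule power_decreasing[OF m1 b0]) (use b1 in simp)
      then show ?thesis using b1 by simp
    qed
    have phase_i: "R (kk (Suc i)) \<le> (1 - f (Suc i)) * (B * t (Suc i)) + f (Suc i) * R (kk i)"
      if "Suc i \<le> L" for i
    proof -
      have P1: "1 \<le> (2^(Suc i) - 1 :: nat)" using P1i[of "Suc i"] by simp
      have "kk i + m (Suc i) \<le> Nf" using kk_mono[OF that] kkL_Nf kk_suc by simp
      from phase_tau[OF kk_ge this P1] show ?thesis
        unfolding kk_suc f_def t_def G_def by simp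
    qed
    have be1: "1 \<le> be" using e_half be_def by simp
    have inv: "R (kk i) \<le> be * (B * t i)" if "i < L" for i
      using that
    proof (induction i)
      case 0
      have "R (kk 0) \<le> B * t 0" using UB[OF kN] t0 unfolding kk_def G_def by simp
      moreover have "1 * (B * t 0) \<le> be * (B * t 0)" using be1 B_pos tnn[of 0]
        by (intro mult_right_mono) auto
      ultimately show ?case by linarith
    next
      case (Suc i)
      have ti: "mu * t i \<le> t (Suc i)" using Lmin[of "Suc i"] Suc.prems by simp
      have IH: "R (kk i) \<le> be * (B * t i)" using Suc by simp
      have ph: "R (kk (Suc i)) \<le> (1 - f (Suc i)) * (B * t (Suc i)) + f (Suc i) * R (kk i)"
        using phase_i Suc.prems by simp
      have fi: "0 \<le> f (Suc i)" "f (Suc i) \<le> e" using fe[of "Suc i"] by auto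
      have "f (Suc i) * R (kk i) \<le> f (Suc i) * (be * (B * t i))" using IH fi by (simp add: mult_left_mono)
      moreover have "(1 - f (Suc i)) * (B * t (Suc i)) + f (Suc i) * (2*(1-e)*(B * t i)) \<le> 2*(1-e)*(B * t (Suc i))"
      proof (rule alg1[OF e_pos e_half fi])
        show "0 \<le> B * t i" using B_pos tnn[of i] by simp
        have "B * (2 * e * t i) \<le> B * t (Suc i)" using ti B_pos unfolding mu_def
          by (intro mult_left_mono) auto
        thus "2 * e * (B * t i) \<le> B * t (Suc i)" by (simp add: algebra_simps)
      qed
      ultimately show ?case using ph unfolding be_def by linarith
    qed
    have phL: "R (kk L) \<le> (1 - f L) * (B * t L) + f L * R (kk L')"
      using phase_i[of L'] L' by simp
    have fL: "0 \<le> f L" "f L \<le> e" "f L < 1" using fe[OF L1] f_lt1[OF L1] by auto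
    have "f L * R (kk L') \<le> f L * (be * (B * t L'))" using inv[of L'] L' fL by (simp add: mult_left_mono)
    hence R1: "R (kk L) \<le> (1 - f L) * (B * t L) + f L * (2*(1-e)*(B * t L'))" using phL unfolding be_def by linarith
    have R2: "(1 - f L) * (B * t L) + f L * (2*(1-e)*(B * t L')) < 4*e*(1-e)*(B * t L')"
    proof (rule alg2[OF e_pos e_half fL])
      show "0 \<le> B * t L" using B_pos tnn[of L] by simp
      show "B * t L < 2 * e * (B * t L')" using tL B_pos L' unfolding mu_def
      proof -
        have "B * t L < B * (2 * e * t L')" using tL B_pos L' unfolding mu_def
          by (intro mult_strict_left_mono) auto
        thus ?thesis by (simp add: algebra_simps)
      qed
    qed
    have R3: "4*e*(1-e)*(B * t L') \<le> A * t L'"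
    proof -
      have "4*e*(1-e)*B \<le> A" using e_rho B_pos by (simp add: le_divide_eq)
      hence "4*e*(1-e)*B * t L' \<le> A * t L'" using tnn[of L'] by (intro mult_right_mono) auto
      thus ?thesis by (simp add: algebra_simps)
    qed
    have "A * sq x (Gam (kk L)) \<le> R (kk L)" by (rule LB[OF kkL_Nf])
    hence "A * sq x (Gam (kk L)) < A * t L'" using R1 R2 R3 by linarith
    hence sqlt: "sq x (Gam (kk L)) < t L'" using A_pos by simp
    have sub: "Gam (kk L) \<subseteq> G" using T_mono[OF kk_ge[of L]] kkL_Nf NfN unfolding G_def Gam_def by auto
    define s' where "s' = card (Gam (kk L))"
    have "\<not> (card G - (2^L' - 1) \<le> s')"
      using tau_le[OF sub, of "2^L' - 1" x] sqlt unfolding s'_def t_def by linarith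
    moreover have p1: "1 \<le> (2::nat)^L'" by simp
    ultimately have s'lt: "s' + 2^L' \<le> s" using cardG sL by linarith
    have "s' < s" using s'lt p1 by linarith
    moreover have "real (kk L) + c * real s' \<le> c * real K"
    proof -
      have "real (s' + 2^L') \<le> real s" using s'lt by (simp only: of_nat_le_iff)
      hence "real s' + 2^L' \<le> real s" by simp
      hence "c * (real s' + 2^L') \<le> c * real s" using cpos by (intro mult_left_mono) auto
      hence "c * real s' + c * 2^L' \<le> c * real s" by (simp add: distrib_left)
      thus ?thesis using kkL less.prems(2) by linarith
    qed
    ultimately show ?thesis using less.IH[of s' "kk L"] unfolding s'_def by blast
  qed
qed

end



lemma ln_bound:
  fixes x :: real assumes "0 \<le> x" "x < 1" shows "ln (1 - x) \<le> - (2*x/(2-x))"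
proof -
  define g where "g z = ln (1 - z) + 2*z/(2-z)" for z :: real
  have "g x \<le> g 0"
  proof (rule DERIV_nonpos_imp_nonincreasing[OF assms(1)])
    fix z :: real assume z: "0 \<le> z" "z \<le> x"
    hence z1: "z < 1" using assms by simp
    have "DERIV g z :> (- 1/(1-z) + 4/(2-z)^2)"
      unfolding g_def using z1
      by (auto intro!: derivative_eq_intros simp: field_simps power2_eq_square)
    moreover have "- 1/(1-z) + 4/(2-z)^2 \<le> 0"
    proof -
      have p: "0 < 1 - z" "0 < (2-z)^2" using z1 by auto
      have "4*(1-z) \<le> (2-z)^2" by (simp add: power2_eq_square algebra_simps)
      hence "4/(2-z)^2 \<le> 1/(1-z)" using p by (simp add: divide_simps)
      thus ?thesis by simp
    qed
    ultimately show "\<exists>y. DERIV g z :> y \<and> y \<le> 0" by blast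
  qed
  thus ?thesis unfolding g_def by simp
qed

lemma omp_consts:
  fixes d c :: real
  assumes d0: "0 \<le> d" and d1: "d < 1"
    and hc: "c \<ge> - (4 * (1 + d) / (1 - d)) * ln (1/2 - sqrt (d / (2 + 2 * d)))"
  defines "A \<equiv> 1 - d" and "B \<equiv> 1 + d" and "kap \<equiv> c / 4"
  defines "e \<equiv> exp (- (A/B) * kap)"
  shows "0 < e" "e \<le> 1/2" "4*e*(1-e) \<le> A/B" "0 < kap"
    "\<And>i. 1 \<le> i \<Longrightarrow> 1 \<le> nat \<lfloor>kap * 2^i\<rfloor> \<and>
        (1 - A/(B*real (2^i - 1 :: nat)))^(nat \<lfloor>kap * 2^i\<rfloor>) \<le> e"
proof -
  define a where "a = sqrt (d / (2 + 2*d))"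
  define q where "q = 1/2 - a"
  define rho where "rho = A/B"
  have Apos: "0 < A" and Bpos: "0 < B" using d0 d1 by (auto simp: A_def B_def)
  have a0: "0 \<le> a" unfolding a_def using d0 by simp
  have a2: "a^2 = d / (2 + 2*d)" unfolding a_def using d0 by simp
  have "d / (2 + 2*d) < 1/4" using d0 d1 by (simp add: divide_simps)
  hence "a^2 < (1/2)^2" using a2 by (simp add: power2_eq_square)
  hence ahalf: "a < 1/2" using power2_less_imp_less[of a "1/2"] by simp
  have qpos: "0 < q" and qhalf: "q \<le> 1/2" using ahalf a0 by (auto simp: q_def)
  have qrho: "4*q*(1-q) = rho"
  proof -
    have "4*q*(1-q) = 1 - 4*a^2" by (simp add: q_def power2_eq_square algebra_simps)
    also have "\<dots> = (1-d)/(1+d)" using a2 d0 by (simp add: field_simps)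
    finally show ?thesis by (simp add: rho_def A_def B_def)
  qed
  have rho_pos: "0 < rho" and rho1: "rho \<le> 1" using Apos Bpos d0 by (auto simp: rho_def A_def B_def)
  have "-(4*B/A) * ln q \<le> c" using hc by (simp add: q_def a_def A_def B_def)
  hence "- ln q \<le> rho * kap"
    using Apos Bpos by (simp add: rho_def kap_def field_simps)
  hence rk: "- rho * kap \<le> ln q" by simp
  have eq: "e \<le> q" unfolding e_def rho_def[symmetric] using rk qpos
    by (metis exp_le_cancel_iff exp_ln)
  show epos: "0 < e" unfolding e_def by simp
  show "e \<le> 1/2" using eq qhalf by simp
  have "e*(1-e) \<le> q*(1-q)"
  proof -
    have "0 \<le> (q - e)*(1 - q - e)" using eq qhalf epos by (intro mult_nonneg_nonneg) auto
    thus ?thesis by (simp add: algebra_simps)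
  qed
  thus "4*e*(1-e) \<le> A/B" using qrho rho_def by simp
  have "ln q \<le> ln (1/2)" using qpos qhalf by simp
  hence "ln 2 \<le> rho * kap" using rk by (simp add: ln_div)
  hence rk2: "2/3 \<le> rho * kap" using ln2_ge_two_thirds by simp
  show kpos: "0 < kap"
  proof (rule ccontr)
    assume "\<not> 0 < kap"
    hence "rho * kap \<le> 0" using rho_pos by (simp add: mult_nonneg_nonpos)
    thus False using rk2 by simp
  qed
  have "rho * kap \<le> 1 * kap" using rho1 kpos by (intro mult_right_mono) auto
  hence k23: "2/3 \<le> kap" using rk2 by simp
  have k2: "2 \<le> kap * (2 + rho)"
  proof -
    have "2*rho \<le> rho*kap*(2+rho)"
    proof -
      have "2*rho \<le> 2/3 * (2 + rho)" using rho1 by simp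
      also have "\<dots> \<le> rho*kap*(2+rho)" using rk2 rho_pos by (intro mult_right_mono) auto
      finally show ?thesis .
    qed
    hence "rho * 2 \<le> rho * (kap*(2+rho))" by (simp add: algebra_simps)
    thus ?thesis using mult_le_cancel_left_pos[OF rho_pos] by blast
  qed
  fix i :: nat assume i1: "1 \<le> i"
  define P where "P = (2^i - 1 :: nat)"
  define m where "m = nat \<lfloor>kap * 2^i\<rfloor>"
  have two: "2 \<le> (2::nat)^i" using power_increasing[OF i1, of "2::nat"] by simp
  hence P1: "(1::real) \<le> real P" unfolding P_def by linarith
  have PP: "real P + 1 = 2^i" unfolding P_def using two by (simp add: of_nat_diff)
  have "(2::real) \<le> 2^i" using two by (metis numeral_le_iff of_nat_le_iff of_nat_numeral of_nat_power semiring_norm(69))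
  hence "kap * 2 \<le> kap * 2^i" using kpos by (intro mult_left_mono) auto
  hence "4/3 \<le> kap * 2^i" using k23 by linarith
  hence m1: "1 \<le> m" unfolding m_def by linarith
  have mge: "kap * 2^i - 1 \<le> real m" unfolding m_def using kpos by linarith
  define x where "x = rho / P"
  have x0: "0 < x" and x1: "x \<le> 1" using rho_pos rho1 P1 by (auto simp: x_def divide_le_eq)
  have xeq: "A/(B*real P) = x" by (simp add: x_def rho_def)
  have "(1 - x)^m \<le> e"
  proof (cases "x = 1")
    case True then show ?thesis using m1 epos by (simp add: zero_power)
  next
    case False
    hence x1': "x < 1" using x1 by simp
    have "(1-x)^m = exp (real m * ln (1-x))" using x1' by (simp add: exp_of_nat_mult)
    also have "real m * ln (1-x) \<le> - rho * kap"
    proof -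
      have l: "ln (1-x) \<le> - (2*x/(2-x))" using ln_bound[of x] x0 x1' by simp
      have px: "2*x/(2-x) = 2*rho/(2*P - rho)" using P1 by (simp add: x_def field_simps)
      have den: "0 < 2*P - rho" using P1 rho1 by simp
      have "rho*kap*(2*P - rho) \<le> (kap * 2^i - 1) * (2*rho)"
      proof -
        have "(kap * 2^i - 1) * (2*rho) - rho*kap*(2*P - rho) = rho*(kap*(2+rho) - 2)"
        proof -
          have "kap * 2^i = kap * (real P + 1)" using PP by simp
          thus ?thesis by (simp add: algebra_simps)
        qed
        moreover have "0 \<le> rho*(kap*(2+rho) - 2)" using rho_pos k2 by simp
        ultimately show ?thesis by linarith
      qed
      also have "\<dots> \<le> real m * (2*rho)" using mge rho_pos by (intro mult_right_mono) auto
      finally have "rho*kap \<le> real m * (2*rho/(2*P - rho))" using den by (simp add: field_simps)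
      also have "\<dots> = real m * (2*x/(2-x))" using px by simp
      finally have "rho*kap \<le> real m * (2*x/(2-x))" .
      moreover have "real m * ln (1-x) \<le> real m * (- (2*x/(2-x)))" using l by (intro mult_left_mono) auto
      ultimately show ?thesis by simp
    qed
    hence "exp (real m * ln (1-x)) \<le> exp (- rho * kap)" by simp
    finally show ?thesis unfolding e_def rho_def by simp
  qed
  thus "1 \<le> nat \<lfloor>kap * 2^i\<rfloor> \<and> (1 - A/(B*real (2^i - 1 :: nat)))^(nat \<lfloor>kap * 2^i\<rfloor>) \<le> e"
    using m1 xeq unfolding m_def P_def by simp
qed



lemma ric_props:
  fixes Phi :: "real^'n^'m"
  shows "0 \<le> ric Phi j"
    and "\<And>v. card (supp v) \<le> j \<Longrightarrow>
        (1 - ric Phi j)*(norm v)\<^sup>2 \<le> (norm (Phi *v v))\<^sup>2 \<and> (norm (Phi *v v))\<^sup>2 \<le> (1 + ric Phi j)*(norm v)\<^sup>2"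
proof -
  define D where "D = {d. d \<ge> 0 \<and> (\<forall>v. sparse j v \<longrightarrow>
      (1 - d) * (norm v)^2 \<le> (norm (Phi *v v))^2 \<and>
      (norm (Phi *v v))^2 \<le> (1 + d) * (norm v)^2)}"
  have ric: "ric Phi j = Inf D" unfolding ric_def D_def ..
  obtain Kb where Kb: "Kb > 0" "\<And>v. norm (Phi *v v) \<le> norm v * Kb"
    using bounded_linear.pos_bounded[OF matrix_vector_mul_bounded_linear[of Phi]] by blast
  define d0 where "d0 = max 1 (Kb^2)"
  have "d0 \<in> D"
  proof -
    have "(1 - d0) * (norm v)^2 \<le> (norm (Phi *v v))^2" for v :: "real^'n"
    proof -
      have "(1 - d0) * (norm v)^2 \<le> 0" unfolding d0_def by (simp add: mult_nonpos_nonneg)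
      thus ?thesis by (meson order_trans zero_le_power2)
    qed
    moreover have "(norm (Phi *v v))^2 \<le> (1 + d0) * (norm v)^2" for v :: "real^'n"
    proof -
      have "(norm (Phi *v v))^2 \<le> (norm v * Kb)^2" using Kb(2)[of v] by (simp add: power_mono)
      also have "\<dots> = Kb^2 * (norm v)^2" by (simp add: power_mult_distrib)
      also have "\<dots> \<le> (1 + d0) * (norm v)^2" unfolding d0_def by (intro mult_right_mono) auto
      finally show ?thesis .
    qed
    moreover have "0 \<le> d0" unfolding d0_def by simp
    ultimately show ?thesis unfolding D_def by blast
  qed
  hence Dne: "D \<noteq> {}" by blast
  show "0 \<le> ric Phi j" unfolding ric by (rule cInf_greatest[OF Dne]) (auto simp: D_def)
  fix v :: "real^'n" assume v: "card (supp v) \<le> j"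
  hence sv: "sparse j v" unfolding sparse_def .
  define n where "n = (norm v)^2"
  define p where "p = (norm (Phi *v v))^2"
  show "(1 - ric Phi j)*(norm v)\<^sup>2 \<le> (norm (Phi *v v))\<^sup>2 \<and> (norm (Phi *v v))\<^sup>2 \<le> (1 + ric Phi j)*(norm v)\<^sup>2"
  proof (cases "v = 0")
    case True then show ?thesis by simp
  next
    case False
    hence np: "0 < n" unfolding n_def by simp
    have l: "(n - p)/n \<le> Inf D"
    proof (rule cInf_greatest[OF Dne])
      fix d assume "d \<in> D"
      hence "(1 - d) * n \<le> p" using sv unfolding D_def n_def p_def by blast
      thus "(n - p)/n \<le> d" using np by (simp add: divide_le_eq algebra_simps)
    qed
    have u: "(p - n)/n \<le> Inf D"
    proof (rule cInf_greatest[OF Dne])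
      fix d assume "d \<in> D"
      hence "p \<le> (1 + d) * n" using sv unfolding D_def n_def p_def by blast
      thus "(p - n)/n \<le> d" using np by (simp add: divide_le_eq algebra_simps)
    qed
    have "(1 - Inf D) * n \<le> p" using l np by (simp add: divide_le_eq algebra_simps)
    moreover have "p \<le> (1 + Inf D) * n" using u np by (simp add: divide_le_eq algebra_simps)
    ultimately show ?thesis unfolding ric n_def p_def by simp
  qed
qed


theorem corollary1:
  fixes Phi :: "real^'n^'m" and x :: "real^'n" and c :: real and K :: nat and \<delta> :: real
    and T :: "nat \<Rightarrow> 'n set" and xh :: "nat \<Rightarrow> real^'n"
  assumes "c > 1"
    and "sparse K x"
    and "\<delta> = ric Phi (nat \<lfloor>(c + 1) * real K\<rfloor>)"
    and "\<delta> < 1"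
    and "c \<ge> - (4 * (1 + \<delta>) / (1 - \<delta>)) * ln (1/2 - sqrt (\<delta> / (2 + 2 * \<delta>)))"
    and "omp_run Phi (Phi *v x) (nat \<lceil>c * real K\<rceil>) T xh"
  shows "xh (nat \<lceil>c * real K\<rceil>) = x"
proof (cases "K = 0")
  case True
  hence "supp x = {}" using assms(2) unfolding sparse_def by simp
  hence "x = 0" by (simp add: supp_empty_iff)
  moreover have "xh 0 = 0" using assms(6) unfolding omp_run_def by simp
  ultimately show ?thesis using True by simp
next
  case False
  hence K1: "1 \<le> K" by simp
  define N where "N = nat \<lceil>c * real K\<rceil>"
  define ord where "ord = nat \<lfloor>(c + 1) * real K\<rfloor>"
  define Nf where "Nf = nat \<lfloor>c * real K\<rfloor>"
  have "c * 1 \<le> c * real K" using assms(1) K1 by (intro mult_left_mono) auto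
  hence "c \<le> c * real K" by simp
  hence cK: "1 < c * real K" using assms(1) by linarith
  have fl0: "0 \<le> \<lfloor>c * real K\<rfloor>" using cK by simp
  have NfN: "Nf \<le> N" unfolding Nf_def N_def by (intro nat_mono) (meson floor_le_ceiling)
  have "\<lfloor>(c + 1) * real K\<rfloor> = \<lfloor>c * real K\<rfloor> + int K"
  proof -
    have "(c + 1) * real K = c * real K + of_int (int K)" by (simp add: algebra_simps)
    thus ?thesis by (simp only: floor_add_int)
  qed
  hence ordNf: "ord = Nf + K" unfolding ord_def Nf_def using nat_add_distrib[OF fl0, of "int K"] by simp
  have "\<lceil>c * real K\<rceil> \<le> \<lfloor>c * real K\<rfloor> + 1" using ceiling_diff_floor_le_1[of "c * real K"] by linarith
  hence Nord: "N \<le> ord" unfolding N_def ordNf Nf_def using fl0 K1 by linarith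
  have d0: "0 \<le> \<delta>" using ric_props(1) assms(3) by simp
  have ripd: "\<And>v. card (supp v) \<le> ord \<Longrightarrow>
        (1-\<delta>)*(norm v)\<^sup>2 \<le> (norm (Phi *v v))\<^sup>2 \<and> (norm (Phi *v v))\<^sup>2 \<le> (1+\<delta>)*(norm v)\<^sup>2"
    using ric_props(2) assms(3) unfolding ord_def by blast
  note cs = omp_consts[OF d0 assms(4) assms(5)]
  define e where "e = exp (- ((1 - \<delta>)/(1 + \<delta>)) * (c/4))"
  interpret P: omp_phase Phi x T xh N \<delta> ord K Nf c "c/4" e
  proof unfold_locales
    show "omp_run Phi (Phi *v x) N T xh" using assms(6) unfolding N_def .
    show "\<And>v. card (supp v) \<le> ord \<Longrightarrow>
        (1-\<delta>)*(norm v)\<^sup>2 \<le> (norm (Phi *v v))\<^sup>2 \<and> (norm (Phi *v v))\<^sup>2 \<le> (1+\<delta>)*(norm v)\<^sup>2"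
      by (rule ripd)
    show "\<delta> < 1" by (rule assms(4))
    show "0 \<le> \<delta>" by (rule d0)
    show "1 \<le> ord" using ordNf K1 by simp
    show "card (supp x) \<le> K" using assms(2) unfolding sparse_def .
    show "Nf \<le> N" by (rule NfN)
    show "Nf + K \<le> ord" using ordNf by simp
    show "c = 4 * (c / 4)" by simp
    show "0 < c / 4" using cs(4) .
    show "0 < e" using cs(1) unfolding e_def .
    show "e \<le> 1 / 2" using cs(2) unfolding e_def .
    show "4 * e * (1 - e) \<le> (1 - \<delta>) / (1 + \<delta>)"
      using cs(3) unfolding e_def .
    show "\<And>i. 1 \<le> i \<Longrightarrow> 1 \<le> nat \<lfloor>c / 4 * 2 ^ i\<rfloor> \<and>
           (1 - (1 - \<delta>) / ((1 + \<delta>) * real (2 ^ i - 1))) ^ nat \<lfloor>c / 4 * 2 ^ i\<rfloor> \<le> e"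
      using cs(5) unfolding e_def .
    show "Nf = nat \<lfloor>c * real K\<rfloor>" by (rule Nf_def)
  qed
  have G0: "P.Gam 0 = supp x" unfolding P.Gam_def using P.T0 by simp
  have "real 0 + c * real (card (supp x)) \<le> c * real K"
    using assms(1) assms(2) unfolding sparse_def by (simp add: mult_left_mono)
  hence "P.Gam Nf = {}" using P.main_claim[of 0 "card (supp x)"] G0 by simp
  hence "supp x \<subseteq> T Nf" unfolding P.Gam_def by auto
  hence sT: "supp x \<subseteq> T N" using P.T_mono[OF NfN] by auto
  have N1: "1 \<le> N" unfolding N_def using cK by linarith
  have ls: "ls_min Phi (Phi *v x) (T N) (xh N)" using P.step_facts(2)[OF N1] by simp
  hence "norm (Phi *v x - Phi *v xh N) \<le> norm (Phi *v x - Phi *v x)" using sT unfolding ls_min_def by blast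
  hence z0: "Phi *v (x - xh N) = 0" by (simp add: matrix_vector_mult_diff_distrib)
  have "supp (x - xh N) \<subseteq> T N" using supp_diff[of x "xh N"] sT ls unfolding ls_min_def by auto
  hence "card (supp (x - xh N)) \<le> card (T N)" by (simp add: card_mono)
  also have "\<dots> \<le> N" using P.card_T by simp
  finally have "card (supp (x - xh N)) \<le> ord" using Nord by simp
  hence "(1-\<delta>)*(norm (x - xh N))\<^sup>2 \<le> 0" using ripd z0 by fastforce
  moreover have "0 < 1 - \<delta>" using assms(4) by simp
  ultimately have "(norm (x - xh N))\<^sup>2 \<le> 0" by (simp add: mult_le_0_iff)
  hence "x - xh N = 0" by simp
  thus ?thesis unfolding N_def by simp
qed

end
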